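(* Let $P$ be a monopolar $k$-chain in $V$ and $r\ge1$. Then $M(\mathrm{Vec}^0(P))\le|P|^{\natural_r}$. If moreover $\mathrm{supp}(P)\subset B_\varepsilon(p)$ for some $p\in V$ and $\varepsilon>0$, then $$|P|^{\natural_1}\le M(\mathrm{Vec}^0(P))+\varepsilon M(P).$$
   Context: $V$ is a finite-dimensional real inner product space. For a simple $k$-vector $\alpha=w_1\wedge\dots\wedge w_k$, $M(\alpha)=\sqrt{\det\langle w_i,w_j\rangle}$; for a general $\alpha\in\Lambda_k(V)$, $M(\alpha)=\inf\{\sum_iM(\alpha_i):\alpha=\sum_i\alpha_i,\ \alpha_i\text{ simple}\}$ (mass). A monopolar $k$-chain is a finite formal sum $P=\sum_i(p_i;\alpha_i)$, $p_i\in V$, $\alpha_i\in\Lambda_k(V)$, linear in the second slot at each point; written with distinct $p_i$, $\mathrm{supp}(P)=\{p_i:\alpha_i\ne0\}$, $M(P)=\sum_iM(\alpha_i)$, and $\mathrm{Vec}^0(P)=\sum_i\alpha_i\in\Lambda_k(V)$. $B_\varepsilon(p)$ is the open ball. $T_u(p;\alpha)=(p+u;\alpha)$, $\Delta_u=T_u-\mathrm{id}$, $\Delta^j_U=\Delta_{u_1}\circ\dots\circ\Delta_{u_j}$, $\|\Delta^j_U(p;\alpha)\|_j=|u_1|\cdots|u_j|M(\alpha)$. A $k$-form is a linear functional $\omega$ on monopolar $k$-chains; $\|\omega\|_0=\sup\{|\omega(p;\alpha)|:\alpha$ simple, $M(\alpha)=1\}$, $\|\omega\|_j=\sup\{|\omega(\Delta^j_U(p;\alpha))|:\|\Delta^j_U(p;\alpha)\|_j=1\}$,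 $|\omega|^{\natural_r}=\max_{0\le j\le r}\|\omega\|_j$, $\mathcal B_k^r$ = forms of finite norm; $|P|^{\natural_r}=\sup_{0\ne\omega\in\mathcal B_k^r}\omega(P)/|\omega|^{\natural_r}$. *)

theory Defs
  imports "HOL-Analysis.Analysis"
begin

text \<open>k-vectors over V (a euclidean space 'a) are modelled coordinate-free as
functions on k-tuples of vectors: the simple k-vector w_0 ^ ... ^ w_(k-1) is the
map v |-> det (w_i . v_j)_(i,j<k).\<close>

type_synonym 'a kvec = "(nat \<Rightarrow> 'a) \<Rightarrow> real"

definition wedge :: "nat \<Rightarrow> (nat \<Rightarrow> 'a::euclidean_space) \<Rightarrow> 'a kvec" where
  "wedge k w = (\<lambda>v. \<Sum>p | p permutes {..<k}. of_int (sign p) * (\<Prod>i<k. w i \<bullet> v (p i)))"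

definition gramdet :: "nat \<Rightarrow> (nat \<Rightarrow> 'a::euclidean_space) \<Rightarrow> real" where
  "gramdet k w = (\<Sum>p | p permutes {..<k}. of_int (sign p) * (\<Prod>i<k. w i \<bullet> w (p i)))"

definition Lambda :: "nat \<Rightarrow> ('a::euclidean_space) kvec set" where
  "Lambda k = {\<alpha>. \<exists>n (c::nat \<Rightarrow> real) ws. \<alpha> = (\<lambda>v. \<Sum>i<n. c i * wedge k (ws i) v)}"

definition simple :: "nat \<Rightarrow> ('a::euclidean_space) kvec \<Rightarrow> bool" where
  "simple k \<alpha> \<longleftrightarrow> (\<exists>c w. \<alpha> = (\<lambda>v. c * wedge k w v))"

definition mass :: "nat \<Rightarrow> ('a::euclidean_space) kvec \<Rightarrow> real" where
  "mass k \<alpha> = Inf {(\<Sum>i<n. \<bar>c i\<bar> * sqrt (gramdet k (ws i))) | n (c::nat \<Rightarrow> real) ws.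
                     \<alpha> = (\<lambda>v. \<Sum>i<n. c i * wedge k (ws i) v)}"

text \<open>Monopolar k-chains: finitely supported maps from points to k-vectors.\<close>
type_synonym 'a chain = "'a \<Rightarrow> 'a kvec"

definition supp :: "('a::euclidean_space) chain \<Rightarrow> 'a set" where
  "supp P = {p. P p \<noteq> (\<lambda>_. 0)}"

definition chains :: "nat \<Rightarrow> ('a::euclidean_space) chain set" where
  "chains k = {P. finite (supp P) \<and> (\<forall>p. P p \<in> Lambda k)}"

definition chain_mass :: "nat \<Rightarrow> ('a::euclidean_space) chain \<Rightarrow> real" where
  "chain_mass k P = (\<Sum>p\<in>supp P. mass k (P p))"

definition vec0 :: "('a::euclidean_space) chain \<Rightarrow> 'a kvec" where
  "vec0 P = (\<lambda>v. \<Sum>p\<in>supp P. P p v)"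

definition dirac :: "'a::euclidean_space \<Rightarrow> 'a kvec \<Rightarrow> 'a chain" where
  "dirac p \<alpha> = (\<lambda>q. if q = p then \<alpha> else (\<lambda>_. 0))"

definition transl :: "'a::euclidean_space \<Rightarrow> 'a chain \<Rightarrow> 'a chain" where
  "transl u P = (\<lambda>q. P (q - u))"

definition diffop :: "'a::euclidean_space \<Rightarrow> 'a chain \<Rightarrow> 'a chain" where
  "diffop u P = (\<lambda>q v. transl u P q v - P q v)"

fun diffops :: "'a::euclidean_space list \<Rightarrow> 'a chain \<Rightarrow> 'a chain" where
  "diffops [] P = P"
| "diffops (u # us) P = diffop u (diffops us P)"

definition is_form :: "nat \<Rightarrow> (('a::euclidean_space) chain \<Rightarrow> real) \<Rightarrow> bool" where
  "is_form k \<omega> \<longleftrightarrow>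
     (\<forall>P\<in>chains k. \<forall>Q\<in>chains k. \<omega> (\<lambda>p v. P p v + Q p v) = \<omega> P + \<omega> Q) \<and>
     (\<forall>c. \<forall>P\<in>chains k. \<omega> (\<lambda>p v. c * P p v) = c * \<omega> P)"

definition form_normj :: "nat \<Rightarrow> (('a::euclidean_space) chain \<Rightarrow> real) \<Rightarrow> nat \<Rightarrow> ereal" where
  "form_normj k \<omega> j =
    (if j = 0 then
       (SUP x \<in> {(p, \<alpha>). simple k \<alpha> \<and> mass k \<alpha> = 1}. ereal \<bar>\<omega> (dirac (fst x) (snd x))\<bar>)
     else
       (SUP x \<in> {(U, p, \<alpha>). length U = j \<and> \<alpha> \<in> Lambda k \<and>
                   (\<Prod>u\<leftarrow>U. norm u) * mass k \<alpha> = 1}.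
          ereal \<bar>\<omega> (diffops (fst x) (dirac (fst (snd x)) (snd (snd x))))\<bar>))"

definition form_natnorm :: "nat \<Rightarrow> nat \<Rightarrow> (('a::euclidean_space) chain \<Rightarrow> real) \<Rightarrow> ereal" where
  "form_natnorm k r \<omega> = (MAX j \<in> {..r}. form_normj k \<omega> j)"

definition Bforms :: "nat \<Rightarrow> nat \<Rightarrow> (('a::euclidean_space) chain \<Rightarrow> real) set" where
  "Bforms k r = {\<omega>. is_form k \<omega> \<and> form_natnorm k r \<omega> < \<infinity>}"

text \<open>Natural norm of a chain: sup over nonzero forms of finite norm; the supremum
of the empty family is taken to be 0.\<close>
definition chain_natnorm :: "nat \<Rightarrow> nat \<Rightarrow> ('a::euclidean_space) chain \<Rightarrow> ereal" where
  "chain_natnorm k r P =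
     sup 0 (SUP \<omega> \<in> {\<omega> \<in> Bforms k r. \<exists>Q\<in>chains k. \<omega> Q \<noteq> 0}.
              ereal (\<omega> P / real_of_ereal (form_natnorm k r \<omega>)))"

end

theory Submission
  imports Defs "HOL-Library.Function_Algebras"
begin

lemma wedge_row:
  assumes "i < k"
  shows "wedge k (w(i:=x)) v = (\<Sum>p | p permutes {..<k}. of_int (sign p) *
      ((x \<bullet> v (p i)) * (\<Prod>l\<in>{..<k}-{i}. w l \<bullet> v (p l))))"
  unfolding wedge_def
proof (rule sum.cong[OF refl])
  fix p
  have "(\<Prod>l<k. (w(i := x)) l \<bullet> v (p l)) = ((w(i := x)) i \<bullet> v (p i)) * (\<Prod>l\<in>{..<k}-{i}. (w(i := x)) l \<bullet> v (p l))"
    using assms by (subst prod.remove[of "{..<k}" i]) auto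
  also have "\<dots> = (x \<bullet> v (p i)) * (\<Prod>l\<in>{..<k}-{i}. w l \<bullet> v (p l))"
    by (auto intro!: prod.cong)
  finally show "of_int (sign p) * (\<Prod>l<k. (w(i := x)) l \<bullet> v (p l)) = of_int (sign p) *
      ((x \<bullet> v (p i)) * (\<Prod>l\<in>{..<k}-{i}. w l \<bullet> v (p l)))" by simp
qed

lemma wedge_row_add:
  assumes "i < k"
  shows "wedge k (w(i:=a+b)) v = wedge k (w(i:=a)) v + wedge k (w(i:=b)) v"
  unfolding wedge_row[OF assms] by (simp add: inner_add_left algebra_simps sum.distrib)

lemma wedge_row_scale:
  assumes "i < k"
  shows "wedge k (w(i:=c *\<^sub>R a)) v = c * wedge k (w(i:=a)) v"
  unfolding wedge_row[OF assms] by (simp add: sum_distrib_left algebra_simps)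

lemma wedge_row_same: "wedge k (w(i:=w i)) v = wedge k w v" by simp

lemma wedge_sym: "wedge k w v = wedge k v w"
proof -
  have "wedge k w v = (\<Sum>p | p permutes {..<k}. of_int (sign (inv p)) * (\<Prod>i<k. w i \<bullet> v (inv p i)))"
    unfolding wedge_def by (subst sum_permutations_inverse) simp
  also have "\<dots> = wedge k v w"
    unfolding wedge_def
  proof (rule sum.cong[OF refl])
    fix p assume "p \<in> {p. p permutes {..<k}}"
    hence p: "p permutes {..<k}" by simp
    have s: "sign (inv p) = sign p"
      by (metis sign_inverse p finite_lessThan permutation_permutes)
    have "(\<Prod>i<k. w i \<bullet> v (inv p i)) = (\<Prod>i\<in>p ` {..<k}. w i \<bullet> v (inv p i))"
      using permutes_image[OF p] by simp
    also have "\<dots> = (\<Prod>i<k. w (p i) \<bullet> v (inv p (p i)))"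
      by (subst prod.reindex) (use permutes_inj_on[OF p] in auto)
    also have "\<dots> = (\<Prod>i<k. v i \<bullet> w (p i))"
      using permutes_inverses(2)[OF p] by (simp add: inner_commute)
    finally show "of_int (sign (inv p)) * (\<Prod>i<k. w i \<bullet> v (inv p i)) = of_int (sign p) * (\<Prod>i<k. v i \<bullet> w (p i))"
      using s by simp
  qed
  finally show ?thesis .
qed

lemma wedge_eq_rows:
  assumes "i < k" "j < k" "i \<noteq> j" "w i = w j"
  shows "wedge k w v = 0"
proof -
  let ?t = "Transposition.transpose i j"
  have t: "?t permutes {..<k}" using assms by (intro permutes_swap_id) auto
  let ?f = "\<lambda>p. of_int (sign p) * (\<Prod>l<k. w l \<bullet> v (p l))"
  have "wedge k w v = (\<Sum>p | p permutes {..<k}. ?f (p \<circ> ?t))"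
    unfolding wedge_def by (rule sum_permutations_compose_right[OF t])
  also have "\<dots> = (\<Sum>p | p permutes {..<k}. - ?f p)"
  proof (rule sum.cong[OF refl])
    fix p assume "p \<in> {p. p permutes {..<k}}"
    hence p: "p permutes {..<k}" by simp
    have sg: "sign (p \<circ> ?t) = - sign p"
      using sign_compose[of p ?t] sign_swap_id[of i j] assms
      by (metis finite_lessThan mult_minus1_right p permutation_permutes t)
    have ww: "w (?t l) = w l" for l
      using assms by (auto simp: Transposition.transpose_def)
    have "(\<Prod>l<k. w l \<bullet> v ((p \<circ> ?t) l)) = (\<Prod>l<k. w (?t l) \<bullet> v (p (?t l)))"
      using ww by simp
    also have "\<dots> = (\<Prod>l\<in>?t ` {..<k}. w l \<bullet> v (p l))"
      by (subst prod.reindex) (use permutes_inj_on[OF t] in auto)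
    also have "\<dots> = (\<Prod>l<k. w l \<bullet> v (p l))"
      using permutes_image[OF t] by simp
    finally show "?f (p \<circ> ?t) = - ?f p" using sg by simp
  qed
  also have "\<dots> = - wedge k w v" unfolding wedge_def by (simp add: sum_negf)
  finally show ?thesis by simp
qed

lemma wedge_add_span:
  assumes "i < k" "x \<in> span (w ` ({..<k}-{i}))"
  shows "wedge k (w(i:= w i + x)) v = wedge k w v"
  using assms(2)
proof (induction rule: span_induct_alt)
  case base then show ?case by simp
next
  case (step c x y)
  then obtain j where j: "j < k" "j \<noteq> i" "x = w j" by auto
  have e: "w i + (c *\<^sub>R x + y) = (w i + y) + c *\<^sub>R w j" using j by (simp add: algebra_simps)
  have "wedge k (w(i := w i + (c *\<^sub>R x + y))) v
      = wedge k (w(i := w i + y)) v + c * wedge k (w(i := w j)) v"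
    unfolding e using wedge_row_add[OF assms(1), of w "w i + y" "c *\<^sub>R w j" v]
      wedge_row_scale[OF assms(1), of w c "w j" v] by simp
  also have "wedge k (w(i := w j)) v = 0"
    by (rule wedge_eq_rows[of i k j]) (use j assms(1) in auto)
  finally show ?case using step by simp
qed

lemma gram_schmidt_wedge:
  assumes "m \<le> k"
  shows "\<exists>w'. (\<forall>v. wedge k w' v = wedge k w v) \<and> (\<forall>i<m. \<forall>j<m. i \<noteq> j \<longrightarrow> w' i \<bullet> w' j = 0)
     \<and> (\<forall>i. m \<le> i \<longrightarrow> w' i = w i)"
  using assms
proof (induction m)
  case 0 then show ?case by (intro exI[of _ w]) auto
next
  case (Suc m)
  then obtain w' where w1: "\<forall>v. wedge k w' v = wedge k w v"
    and w2: "\<forall>i<m. \<forall>j<m. i \<noteq> j \<longrightarrow> w' i \<bullet> w' j = 0" and w3: "\<forall>i. m \<le> i \<longrightarrow> w' i = w i"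
    by auto
  have mk: "m < k" using Suc by simp
  define c where "c j = (w' m \<bullet> w' j) / (w' j \<bullet> w' j)" for j
  define x where "x = - (\<Sum>j<m. c j *\<^sub>R w' j)"
  define w'' where "w'' = w'(m := w' m + x)"
  have xs: "x \<in> span (w' ` ({..<k}-{m}))"
    unfolding x_def
    by (intro span_neg span_sum span_scale span_base) (use mk in auto)
  have e1: "\<forall>v. wedge k w'' v = wedge k w v"
    using wedge_add_span[OF mk xs] w1 unfolding w''_def by simp
  have orth: "w'' m \<bullet> w' j = 0" if "j < m" for j
  proof -
    have "(\<Sum>l<m. c l *\<^sub>R w' l) \<bullet> w' j = (\<Sum>l<m. c l * (w' l \<bullet> w' j))"
      by (simp add: inner_sum_left)
    also have "\<dots> = c j * (w' j \<bullet> w' j)"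
      by (subst sum.remove[of _ j]) (use that w2 in \<open>auto intro!: sum.neutral\<close>)
    also have "\<dots> = w' m \<bullet> w' j"
      by (cases "w' j = 0") (auto simp: c_def)
    finally show ?thesis unfolding w''_def x_def by (simp add: inner_diff_left)
  qed
  have "\<forall>i<Suc m. \<forall>j<Suc m. i \<noteq> j \<longrightarrow> w'' i \<bullet> w'' j = 0"
  proof (intro allI impI)
    fix i j assume ij: "i < Suc m" "j < Suc m" "i \<noteq> j"
    show "w'' i \<bullet> w'' j = 0"
    proof (cases "i = m")
      case True then show ?thesis using ij orth[of j] by (simp add: w''_def)
    next
      case False
      show ?thesis
      proof (cases "j = m")
        case True then show ?thesis using ij False orth[of i] by (simp add: w''_def inner_commute)
      next
        case False2: False
        then show ?thesis using ij False w2 by (simp add: w''_def)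
      qed
    qed
  qed
  moreover have "\<forall>i. Suc m \<le> i \<longrightarrow> w'' i = w i" using w3 by (simp add: w''_def)
  ultimately show ?case using e1 by blast
qed

lemma gramdet_wedge: "gramdet k w = wedge k w w"
  unfolding gramdet_def wedge_def ..

lemma wedge_orth:
  assumes "\<forall>i<k. \<forall>j<k. i \<noteq> j \<longrightarrow> w i \<bullet> w j = 0"
  shows "wedge k w w = (\<Prod>i<k. w i \<bullet> w i)"
proof -
  have fin: "finite {p. p permutes {..<k}}" by (simp add: finite_permutations)
  have "wedge k w w = of_int (sign (id::nat\<Rightarrow>nat)) * (\<Prod>i<k. w i \<bullet> w (id i)) +
     (\<Sum>p \<in> {p. p permutes {..<k}} - {id}. of_int (sign p) * (\<Prod>i<k. w i \<bullet> w (p i)))"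
    unfolding wedge_def by (subst sum.remove[OF fin, of id]) (auto intro: permutes_id)
  also have "(\<Sum>p \<in> {p. p permutes {..<k}} - {id}. of_int (sign p) * (\<Prod>i<k. w i \<bullet> w (p i))) = 0"
  proof (rule sum.neutral, rule ballI)
    fix p assume "p \<in> {p. p permutes {..<k}} - {id}"
    hence p: "p permutes {..<k}" "p \<noteq> id" by auto
    then obtain i where i: "p i \<noteq> i" by (auto simp: fun_eq_iff)
    have ik: "i < k" using i p(1) permutes_not_in by fastforce
    have pik: "p i < k" using permutes_in_image[OF p(1)] ik by auto
    have "(\<Prod>i<k. w i \<bullet> w (p i)) = 0"
      using ik pik i assms by (intro prod_zero) (auto intro!: bexI[of _ i])
    then show "of_int (sign p) * (\<Prod>i<k. w i \<bullet> w (p i)) = 0" by simp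
  qed
  finally show ?thesis by (simp add: sign_id)
qed

lemma gramdet_nonneg_aux:
  "\<exists>w'. (\<forall>v. wedge k w' v = wedge k w v) \<and> gramdet k w = (\<Prod>i<k. norm (w' i))^2"
proof -
  obtain w' where w1: "\<forall>v. wedge k w' v = wedge k w v"
    and w2: "\<forall>i<k. \<forall>j<k. i \<noteq> j \<longrightarrow> w' i \<bullet> w' j = 0"
    using gram_schmidt_wedge[of k k w] by auto
  have "gramdet k w = wedge k w w" by (rule gramdet_wedge)
  also have "\<dots> = wedge k w' w" using w1 by simp
  also have "\<dots> = wedge k w w'" by (rule wedge_sym)
  also have "\<dots> = wedge k w' w'" using w1 by simp
  also have "\<dots> = (\<Prod>i<k. w' i \<bullet> w' i)" by (rule wedge_orth[OF w2])
  also have "\<dots> = (\<Prod>i<k. norm (w' i))^2"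
    by (simp add: power2_norm_eq_inner prod_power_distrib)
  finally show ?thesis using w1 by blast
qed

lemma gramdet_nonneg: "gramdet k w \<ge> 0"
  using gramdet_nonneg_aux[of k w] by auto

lemma wedge_bound:
  "\<bar>wedge k w v\<bar> \<le> sqrt (gramdet k w) * (fact k * (\<Prod>j<k. norm (v j)))"
proof -
  obtain w' where w1: "\<forall>v. wedge k w' v = wedge k w v"
    and g: "gramdet k w = (\<Prod>i<k. norm (w' i))^2"
    using gramdet_nonneg_aux[of k w] by auto
  have sq: "sqrt (gramdet k w) = (\<Prod>i<k. norm (w' i))"
    unfolding g by (simp add: prod_nonneg)
  have "\<bar>wedge k w v\<bar> = \<bar>wedge k w' v\<bar>" using w1 by simp
  also have "\<dots> \<le> (\<Sum>p | p permutes {..<k}. \<bar>of_int (sign p) * (\<Prod>i<k. w' i \<bullet> v (p i))\<bar>)"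
    unfolding wedge_def by (rule sum_abs)
  also have "\<dots> \<le> (\<Sum>p | p permutes {..<k}. (\<Prod>i<k. norm (w' i)) * (\<Prod>j<k. norm (v j)))"
  proof (rule sum_mono)
    fix p assume "p \<in> {p. p permutes {..<k}}"
    hence p: "p permutes {..<k}" by simp
    have sa: "\<bar>of_int (sign p) :: real\<bar> = 1" by (simp add: sign_def)
    have "\<bar>of_int (sign p) * (\<Prod>i<k. w' i \<bullet> v (p i))\<bar> = (\<Prod>i<k. \<bar>w' i \<bullet> v (p i)\<bar>)"
      by (simp add: abs_mult sa abs_prod)
    also have "\<dots> \<le> (\<Prod>i<k. norm (w' i) * norm (v (p i)))"
      by (rule prod_mono) (simp add: Cauchy_Schwarz_ineq2)
    also have "\<dots> = (\<Prod>i<k. norm (w' i)) * (\<Prod>i<k. norm (v (p i)))"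
      by (simp add: prod.distrib)
    also have "(\<Prod>i<k. norm (v (p i))) = (\<Prod>j<k. norm (v j))"
      using prod.permute[OF p, of "\<lambda>j. norm (v j)"] by (simp add: o_def)
    finally show "\<bar>of_int (sign p) * (\<Prod>i<k. w' i \<bullet> v (p i))\<bar> \<le> (\<Prod>i<k. norm (w' i)) * (\<Prod>j<k. norm (v j))" .
  qed
  also have "\<dots> = fact k * ((\<Prod>i<k. norm (w' i)) * (\<Prod>j<k. norm (v j)))"
    by (simp add: card_permutations)
  finally show ?thesis unfolding sq by (simp add: algebra_simps)
qed

lemma sum_split_add: "(\<Sum>i<n+m. f i) = (\<Sum>i<(n::nat). f i) + (\<Sum>i<(m::nat). f (n+i))" for f :: "nat \<Rightarrow> 'b::comm_monoid_add"
  by (induction m) (auto simp: add.assoc)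

lemma mass_bdd: "bdd_below {(\<Sum>i<(n::nat). \<bar>c i\<bar> * sqrt (gramdet k (ws i))) | n (c::nat \<Rightarrow> real) ws.
                     \<alpha> = (\<lambda>v. \<Sum>i<(n::nat). c i * wedge k (ws i) v)}"
  by (rule bdd_belowI[of _ 0]) (auto intro!: sum_nonneg simp: gramdet_nonneg)

lemma mass_le:
  assumes "\<alpha> = (\<lambda>v. \<Sum>i<(n::nat). c i * wedge k (ws i) v)"
  shows "mass k \<alpha> \<le> (\<Sum>i<(n::nat). \<bar>c i\<bar> * sqrt (gramdet k (ws i)))"
  unfolding mass_def by (rule cInf_lower[OF _ mass_bdd]) (use assms in blast)

lemma mass_ge:
  assumes "\<alpha> \<in> Lambda k"
    and "\<And>n c ws. \<alpha> = (\<lambda>v. \<Sum>i<(n::nat). c i * wedge k (ws i) v) \<Longrightarrow> x \<le> (\<Sum>i<(n::nat). \<bar>c i\<bar> * sqrt (gramdet k (ws i)))"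
  shows "x \<le> mass k \<alpha>"
  unfolding mass_def
proof (rule cInf_greatest)
  show "{(\<Sum>i<(n::nat). \<bar>c i\<bar> * sqrt (gramdet k (ws i))) | n (c::nat \<Rightarrow> real) ws.
                     \<alpha> = (\<lambda>v. \<Sum>i<(n::nat). c i * wedge k (ws i) v)} \<noteq> {}"
    using assms(1) unfolding Lambda_def by blast
qed (use assms(2) in blast)

lemma mass_nonneg: "\<alpha> \<in> Lambda k \<Longrightarrow> mass k \<alpha> \<ge> 0"
  by (rule mass_ge) (auto intro!: sum_nonneg simp: gramdet_nonneg)

lemma abs_le_mass:
  assumes "\<alpha> \<in> Lambda k"
  shows "\<bar>\<alpha> v\<bar> \<le> (fact k * (\<Prod>j<k. norm (v j))) * mass k \<alpha>"
proof -
  define C where "C = fact k * (\<Prod>j<k. norm (v j))"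
  have C0: "C \<ge> 0" unfolding C_def by (simp add: prod_nonneg)
  have key: "\<bar>\<alpha> v\<bar> \<le> C * (\<Sum>i<(n::nat). \<bar>c i\<bar> * sqrt (gramdet k (ws i)))"
    if "\<alpha> = (\<lambda>v. \<Sum>i<(n::nat). c i * wedge k (ws i) v)" for n c ws
  proof -
    have "\<bar>\<alpha> v\<bar> \<le> (\<Sum>i<(n::nat). \<bar>c i * wedge k (ws i) v\<bar>)" using that by (simp add: sum_abs)
    also have "\<dots> \<le> (\<Sum>i<(n::nat). \<bar>c i\<bar> * (sqrt (gramdet k (ws i)) * C))"
      by (rule sum_mono) (auto simp: abs_mult C_def intro!: mult_left_mono wedge_bound)
    finally show ?thesis by (simp add: sum_distrib_left algebra_simps)
  qed
  show ?thesis
  proof (cases "C = 0")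
    case True
    obtain n c ws where "\<alpha> = (\<lambda>v. \<Sum>i<(n::nat). c i * wedge k (ws i) v)" using assms unfolding Lambda_def by blast
    with key[OF this] True show ?thesis unfolding C_def[symmetric] by simp
  next
    case False
    hence Cp: "C > 0" using C0 by simp
    have "\<bar>\<alpha> v\<bar> / C \<le> mass k \<alpha>"
      by (rule mass_ge[OF assms]) (use key Cp in \<open>simp add: divide_le_eq mult.commute\<close>)
    thus ?thesis using Cp unfolding C_def[symmetric] by (simp add: divide_le_eq mult.commute)
  qed
qed

lemma mass_zero_imp:
  assumes "\<alpha> \<in> Lambda k" "mass k \<alpha> = 0"
  shows "\<alpha> = (\<lambda>_. 0)"
proof
  fix v show "\<alpha> v = 0" using abs_le_mass[OF assms(1), of v] assms(2) by simp
qed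

lemma Lambda_I: "(\<lambda>v. \<Sum>i<(n::nat). c i * wedge k (ws i) v) \<in> Lambda k"
  unfolding Lambda_def by blast

lemma Lambda_zero: "(\<lambda>_. 0) \<in> Lambda k"
  using Lambda_I[where n=0 and k=k] by simp

lemma Lambda_wedge: "(\<lambda>v. c * wedge k w v) \<in> Lambda k"
  using Lambda_I[where n=1 and k=k and c="\<lambda>_. c" and ws="\<lambda>_. w"] by simp

lemma Lambda_wedge': "wedge k w \<in> Lambda k"
  using Lambda_wedge[where c=1 and k=k and w=w] by simp

lemma Lambda_lin:
  assumes "\<alpha> \<in> Lambda k" "\<beta> \<in> Lambda k"
  shows "(\<lambda>v. a * \<alpha> v + b * \<beta> v) \<in> Lambda k"
proof -
  obtain n c ws where a: "\<alpha> = (\<lambda>v. \<Sum>i<(n::nat). c i * wedge k (ws i) v)" using assms unfolding Lambda_def by blast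
  obtain m d us where b: "\<beta> = (\<lambda>v. \<Sum>i<(m::nat). d i * wedge k (us i) v)" using assms unfolding Lambda_def by blast
  define c' where "c' i = (if i < n then a * c i else b * d (i - n))" for i
  define ws' where "ws' i = (if i < n then ws i else us (i - n))" for i
  have "(\<lambda>v. a * \<alpha> v + b * \<beta> v) = (\<lambda>v. \<Sum>i<n+m. c' i * wedge k (ws' i) v)"
    unfolding a b sum_split_add by (auto simp: c'_def ws'_def sum_distrib_left algebra_simps intro!: sum.cong)
  thus ?thesis by (simp add: Lambda_I)
qed

lemma Lambda_add: "\<alpha> \<in> Lambda k \<Longrightarrow> \<beta> \<in> Lambda k \<Longrightarrow> (\<lambda>v. \<alpha> v + \<beta> v) \<in> Lambda k"
  using Lambda_lin[where \<alpha>=\<alpha> and k=k and \<beta>=\<beta> and a=1 and b=1] by simp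

lemma Lambda_diff: "\<alpha> \<in> Lambda k \<Longrightarrow> \<beta> \<in> Lambda k \<Longrightarrow> (\<lambda>v. \<alpha> v - \<beta> v) \<in> Lambda k"
  using Lambda_lin[where \<alpha>=\<alpha> and k=k and \<beta>=\<beta> and a=1 and b="-1"] by simp

lemma Lambda_scale: "\<alpha> \<in> Lambda k \<Longrightarrow> (\<lambda>v. a * \<alpha> v) \<in> Lambda k"
  using Lambda_lin[where \<alpha>=\<alpha> and k=k and \<beta>=\<alpha> and a=a and b=0] by simp

lemma Lambda_sum: "finite S \<Longrightarrow> (\<And>i. i \<in> S \<Longrightarrow> f i \<in> Lambda k) \<Longrightarrow> (\<lambda>v. \<Sum>i\<in>S. f i v) \<in> Lambda k"
  by (induction S rule: finite_induct) (auto simp: Lambda_zero intro: Lambda_add)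

lemma mass_add:
  assumes "\<alpha> \<in> Lambda k" "\<beta> \<in> Lambda k"
  shows "mass k (\<lambda>v. \<alpha> v + \<beta> v) \<le> mass k \<alpha> + mass k \<beta>"
proof -
  have key: "mass k (\<lambda>v. \<alpha> v + \<beta> v) \<le> (\<Sum>i<(n::nat). \<bar>c i\<bar> * sqrt (gramdet k (ws i))) + (\<Sum>i<(m::nat). \<bar>d i\<bar> * sqrt (gramdet k (us i)))"
    if a: "\<alpha> = (\<lambda>v. \<Sum>i<(n::nat). c i * wedge k (ws i) v)" and b: "\<beta> = (\<lambda>v. \<Sum>i<(m::nat). d i * wedge k (us i) v)"
    for n c ws m d us
  proof -
    define c' where "c' i = (if i < n then c i else d (i - n))" for i
    define ws' where "ws' i = (if i < n then ws i else us (i - n))" for i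
    have "(\<lambda>v. \<alpha> v + \<beta> v) = (\<lambda>v. \<Sum>i<n+m. c' i * wedge k (ws' i) v)"
      unfolding a b sum_split_add by (auto simp: c'_def ws'_def intro!: sum.cong)
    hence "mass k (\<lambda>v. \<alpha> v + \<beta> v) \<le> (\<Sum>i<n+m. \<bar>c' i\<bar> * sqrt (gramdet k (ws' i)))" by (rule mass_le)
    also have "\<dots> = (\<Sum>i<(n::nat). \<bar>c i\<bar> * sqrt (gramdet k (ws i))) + (\<Sum>i<(m::nat). \<bar>d i\<bar> * sqrt (gramdet k (us i)))"
      unfolding sum_split_add by (auto simp: c'_def ws'_def intro!: sum.cong)
    finally show ?thesis .
  qed
  have "mass k (\<lambda>v. \<alpha> v + \<beta> v) - mass k \<beta> \<le> mass k \<alpha>"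
  proof (rule mass_ge[OF assms(1)])
    fix n c ws assume a: "\<alpha> = (\<lambda>v. \<Sum>i<(n::nat). c i * wedge k (ws i) v)"
    have "mass k (\<lambda>v. \<alpha> v + \<beta> v) - (\<Sum>i<(n::nat). \<bar>c i\<bar> * sqrt (gramdet k (ws i))) \<le> mass k \<beta>"
      by (rule mass_ge[OF assms(2)]) (use key[OF a] in force)
    thus "mass k (\<lambda>v. \<alpha> v + \<beta> v) - mass k \<beta> \<le> (\<Sum>i<(n::nat). \<bar>c i\<bar> * sqrt (gramdet k (ws i)))" by simp
  qed
  thus ?thesis by simp
qed

lemma mass_scale_le:
  assumes "\<alpha> \<in> Lambda k"
  shows "mass k (\<lambda>v. a * \<alpha> v) \<le> \<bar>a\<bar> * mass k \<alpha>"
proof (cases "a = 0")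
  case True
  have "mass k (\<lambda>v. a * \<alpha> v) \<le> 0" using mass_le[where \<alpha>="\<lambda>v. a * \<alpha> v" and n=0 and k=k] True by simp
  thus ?thesis using True by simp
next
  case False
  have "mass k (\<lambda>v. a * \<alpha> v) / \<bar>a\<bar> \<le> mass k \<alpha>"
  proof (rule mass_ge[OF assms])
    fix n c ws assume h: "\<alpha> = (\<lambda>v. \<Sum>i<(n::nat). c i * wedge k (ws i) v)"
    have "(\<lambda>v. a * \<alpha> v) = (\<lambda>v. \<Sum>i<(n::nat). (a * c i) * wedge k (ws i) v)"
      unfolding h by (simp add: sum_distrib_left mult.assoc)
    hence "mass k (\<lambda>v. a * \<alpha> v) \<le> (\<Sum>i<(n::nat). \<bar>a * c i\<bar> * sqrt (gramdet k (ws i)))" by (rule mass_le)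
    also have "\<dots> = \<bar>a\<bar> * (\<Sum>i<(n::nat). \<bar>c i\<bar> * sqrt (gramdet k (ws i)))"
      by (simp add: sum_distrib_left abs_mult mult.assoc)
    finally show "mass k (\<lambda>v. a * \<alpha> v) / \<bar>a\<bar> \<le> (\<Sum>i<(n::nat). \<bar>c i\<bar> * sqrt (gramdet k (ws i)))"
      using False by (simp add: divide_le_eq mult.commute)
  qed
  thus ?thesis using False by (simp add: divide_le_eq mult.commute)
qed

lemma mass_scale:
  assumes "\<alpha> \<in> Lambda k"
  shows "mass k (\<lambda>v. a * \<alpha> v) = \<bar>a\<bar> * mass k \<alpha>"
proof (cases "a = 0")
  case True
  have "mass k (\<lambda>v. a * \<alpha> v) \<ge> 0" using True by (simp add: mass_nonneg Lambda_zero)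
  with mass_scale_le[OF assms, of a] True show ?thesis by simp
next
  case False
  have "mass k \<alpha> = mass k (\<lambda>v. (1/a) * (a * \<alpha> v))" using False by simp
  also have "\<dots> \<le> \<bar>1/a\<bar> * mass k (\<lambda>v. a * \<alpha> v)"
    by (rule mass_scale_le[OF Lambda_scale[OF assms]])
  finally have "\<bar>a\<bar> * mass k \<alpha> \<le> mass k (\<lambda>v. a * \<alpha> v)" using False
    by (simp add: field_simps)
  with mass_scale_le[OF assms, of a] show ?thesis by simp
qed

lemma mass_wedge_le: "mass k (\<lambda>v. c * wedge k w v) \<le> \<bar>c\<bar> * sqrt (gramdet k w)"
  using mass_le[where \<alpha>="\<lambda>v. c * wedge k w v" and n=1 and c="\<lambda>_. c" and k=k and ws="\<lambda>_. w"] by simp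

lemma mass_wedge_le': "mass k (wedge k w) \<le> sqrt (gramdet k w)"
  using mass_wedge_le[where k=k and c=1 and w=w] by simp

instantiation "fun" :: (type, real_vector) real_vector
begin
definition scaleR_fun :: "real \<Rightarrow> ('a \<Rightarrow> 'b) \<Rightarrow> 'a \<Rightarrow> 'b" where "scaleR_fun r f = (\<lambda>x. r *\<^sub>R f x)"
instance by standard (auto simp: scaleR_fun_def fun_eq_iff algebra_simps)
end

lemma hb_step:
  fixes M :: "'v::real_vector \<Rightarrow> real" and L :: "'v set"
  assumes sub: "span B \<subseteq> L" "x \<in> L" "x \<notin> span B" "independent B"
    and Lc: "\<And>y z. y \<in> L \<Longrightarrow> z \<in> L \<Longrightarrow> y + z \<in> L" "\<And>y c. y \<in> L \<Longrightarrow> c *\<^sub>R y \<in> L"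
    and Madd: "\<And>y z. y \<in> L \<Longrightarrow> z \<in> L \<Longrightarrow> M (y + z) \<le> M y + M z"
    and Mscale: "\<And>y c. y \<in> L \<Longrightarrow> M (c *\<^sub>R y) = \<bar>c\<bar> * M y"
    and lin: "linear \<phi>" and le: "\<forall>y\<in>span B. \<phi> y \<le> M y"
  shows "\<exists>\<phi>'. linear \<phi>' \<and> (\<forall>y\<in>span B. \<phi>' y = \<phi> y) \<and> (\<forall>y\<in>span (insert x B). \<phi>' y \<le> M y)"
proof -
  have Ldiff: "y - z \<in> L" if "y \<in> L" "z \<in> L" for y z
    using Lc(1)[OF that(1) Lc(2)[OF that(2), of "-1"]] by simp
  have key: "\<phi> s - M (s - x) \<le> M (s' + x) - \<phi> s'" if "s \<in> span B" "s' \<in> span B" for s s'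
  proof -
    have sL: "s \<in> L" "s' \<in> L" using that sub(1) by auto
    have "\<phi> s + \<phi> s' = \<phi> (s + s')" using lin by (simp add: linear_add)
    also have "\<dots> \<le> M (s + s')" using le that by (simp add: span_add)
    also have "s + s' = (s - x) + (s' + x)" by simp
    also have "M \<dots> \<le> M (s - x) + M (s' + x)" using sL sub(2) by (intro Madd Ldiff Lc)
    finally show ?thesis by simp
  qed
  define A where "A = {\<phi> s - M (s - x) | s. s \<in> span B}"
  define c where "c = Sup A"
  have "\<phi> 0 - M (0 - x) \<in> A" unfolding A_def by (intro CollectI exI[of _ 0]) (simp add: span_zero)
  hence Ane: "A \<noteq> {}" by blast
  have Abdd: "bdd_above A" unfolding A_def
    by (rule bdd_aboveI[of _ "M (0 + x) - \<phi> 0"]) (clarify, rule key, assumption, rule span_zero)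
  have c_le: "c \<le> M (s' + x) - \<phi> s'" if "s' \<in> span B" for s'
    unfolding c_def by (rule cSup_least[OF Ane]) (unfold A_def, clarify, rule key, assumption, rule that)
  have c_ge: "\<phi> s - M (s - x) \<le> c" if "s \<in> span B" for s
    unfolding c_def by (rule cSup_upper[OF _ Abdd]) (unfold A_def, intro CollectI exI[of _ s], simp add: that)
  have ind: "independent (insert x B)" using sub by (simp add: independent_insert)
  have xB: "x \<notin> B" using sub(3) span_base[of x B] by auto
  obtain g where g: "linear g" "\<forall>b\<in>insert x B. g b = (if b = x then c else \<phi> b)"
    using linear_independent_extend[OF ind, of "\<lambda>b. if b = x then c else \<phi> b"] by auto
  have gphi: "\<forall>y\<in>span B. g y = \<phi> y"
  proof
    fix y assume y: "y \<in> span B"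
    have "z \<in> B \<Longrightarrow> g z = \<phi> z" for z using g(2) xB by (cases "z = x") auto
    then show "g y = \<phi> y" by (rule linear_eq_on_span[OF g(1) lin _ y])
  qed
  have "g y \<le> M y" if y: "y \<in> span (insert x B)" for y
  proof -
    obtain t where t: "y - t *\<^sub>R x \<in> span B" using y span_breakdown_eq by blast
    define s where "s = y - t *\<^sub>R x"
    have sB: "s \<in> span B" using t s_def by simp
    have sL: "s \<in> L" using sB sub(1) by auto
    have ys: "y = s + t *\<^sub>R x" unfolding s_def by simp
    have gy: "g y = \<phi> s + t * c"
      using g gphi sB ys by (simp add: linear_add linear_scale)
    show ?thesis
    proof (cases "t = 0")
      case True then show ?thesis using gy ys le sB by simp
    next
      case False
      show ?thesis
      proof (cases "t > 0")
        case True
        have s1: "(1/t) *\<^sub>R s \<in> span B" using sB by (simp add: span_scale)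
        have cl: "c \<le> M ((1/t) *\<^sub>R s + x) - \<phi> ((1/t) *\<^sub>R s)" by (rule c_le[OF s1])
        have "t * c \<le> t * M ((1/t) *\<^sub>R s + x) - t * \<phi> ((1/t) *\<^sub>R s)"
          using mult_left_mono[OF cl, of t] True by (simp add: right_diff_distrib)
        also have "t * M ((1/t) *\<^sub>R s + x) = M (t *\<^sub>R ((1/t) *\<^sub>R s + x))"
          using True sL sub(2) by (simp add: Mscale Lc)
        also have "t *\<^sub>R ((1/t) *\<^sub>R s + x) = s + t *\<^sub>R x" using True by (simp add: algebra_simps)
        also have "t * \<phi> ((1/t) *\<^sub>R s) = \<phi> s" using True lin by (simp add: linear_scale)
        finally show ?thesis using gy ys by simp
      next
        case False2: False
        define \<tau> where "\<tau> = - t"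
        have tp: "\<tau> > 0" using False False2 \<tau>_def by simp
        have s1: "(1/\<tau>) *\<^sub>R s \<in> span B" using sB by (simp add: span_scale)
        have cl: "\<phi> ((1/\<tau>) *\<^sub>R s) - M ((1/\<tau>) *\<^sub>R s - x) \<le> c" by (rule c_ge[OF s1])
        have "\<tau> * \<phi> ((1/\<tau>) *\<^sub>R s) - \<tau> * M ((1/\<tau>) *\<^sub>R s - x) \<le> \<tau> * c"
          using mult_left_mono[OF cl, of \<tau>] tp by (simp add: right_diff_distrib)
        also have "\<tau> * M ((1/\<tau>) *\<^sub>R s - x) = M (\<tau> *\<^sub>R ((1/\<tau>) *\<^sub>R s - x))"
          using tp sL sub(2) by (simp add: Mscale Lc Ldiff)
        also have "\<tau> *\<^sub>R ((1/\<tau>) *\<^sub>R s - x) = s + t *\<^sub>R x" using tp \<tau>_def by (simp add: algebra_simps)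
        also have "\<tau> * \<phi> ((1/\<tau>) *\<^sub>R s) = \<phi> s" using tp lin by (simp add: linear_scale)
        finally show ?thesis using gy ys \<tau>_def by simp
      qed
    qed
  qed
  thus ?thesis using g(1) gphi by blast
qed

lemma hahn_banach_finite:
  fixes M :: "'v::real_vector \<Rightarrow> real" and G :: "'v set"
  assumes fin: "finite G"
    and Madd: "\<And>y z. y \<in> span G \<Longrightarrow> z \<in> span G \<Longrightarrow> M (y + z) \<le> M y + M z"
    and Mscale: "\<And>y c. y \<in> span G \<Longrightarrow> M (c *\<^sub>R y) = \<bar>c\<bar> * M y"
    and x0: "x0 \<in> span G"
  shows "\<exists>\<phi>. linear \<phi> \<and> \<phi> x0 = M x0 \<and> (\<forall>y\<in>span G. \<phi> y \<le> M y)"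
proof -
  have M0: "M 0 = 0" using Mscale[of 0 0] by (simp add: span_zero)
  have Mx0: "M x0 \<ge> 0"
  proof -
    have "M 0 \<le> M x0 + M (-x0)" using Madd[of x0 "-x0"] x0 by (simp add: span_neg)
    also have "M (-x0) = M x0" using Mscale[of x0 "-1"] x0 by simp
    finally show ?thesis using M0 by simp
  qed
  have "\<exists>B \<phi>. independent B \<and> span B \<subseteq> span G \<and> x0 \<in> span B \<and> H \<subseteq> span B \<and> linear \<phi> \<and>
      \<phi> x0 = M x0 \<and> (\<forall>y\<in>span B. \<phi> y \<le> M y)" if "finite H" "H \<subseteq> span G" for H
    using that
  proof (induction H rule: finite_induct)
    case empty
    show ?case
    proof (cases "x0 = 0")
      case True
      show ?thesis
        by (rule exI[of _ "{}"], rule exI[of _ "\<lambda>_. 0"]) (auto simp: True M0 linear_zero span_zero independent_empty)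
    next
      case False
      have ind: "independent {x0}" using False by (simp add: independent_insert)
      obtain g where g: "linear g" "\<forall>b\<in>{x0}. g b = M x0"
        using linear_independent_extend[OF ind, of "\<lambda>_. M x0"] by blast
      have "\<forall>y\<in>span {x0}. g y \<le> M y"
      proof
        fix y assume "y \<in> span {x0}"
        then obtain t where y: "y = t *\<^sub>R x0" by (auto simp: span_singleton)
        have "g y = t * M x0" using g y by (simp add: linear_scale)
        also have "\<dots> \<le> \<bar>t\<bar> * M x0" using Mx0 by (simp add: mult_right_mono)
        also have "\<dots> = M y" using y Mscale x0 by simp
        finally show "g y \<le> M y" .
      qed
      moreover have "span {x0} \<subseteq> span G" by (rule span_minimal) (auto simp: x0 subspace_span)
      ultimately show ?thesis using ind g by (intro exI[of _ "{x0}"] exI[of _ g]) (auto intro: span_base)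
    qed
  next
    case (insert h H)
    then obtain B \<phi> where B: "independent B" "span B \<subseteq> span G" "x0 \<in> span B" "H \<subseteq> span B" "linear \<phi>"
      "\<phi> x0 = M x0" "\<forall>y\<in>span B. \<phi> y \<le> M y" by auto
    show ?case
    proof (cases "h \<in> span B")
      case True then show ?thesis using B by blast
    next
      case False
      have hG: "h \<in> span G" using insert by auto
      obtain \<phi>' where \<phi>': "linear \<phi>'" "\<forall>y\<in>span B. \<phi>' y = \<phi> y" "\<forall>y\<in>span (insert h B). \<phi>' y \<le> M y"
        using hb_step[of B "span G" h M \<phi>, OF B(2) hG False B(1) span_add span_scale Madd Mscale B(5) B(7)]
        by blast
      have "independent (insert h B)" using B(1) False by (simp add: independent_insert)
      moreover have "span (insert h B) \<subseteq> span G"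
        by (rule span_minimal) (use B(2) hG span_superset[of B] in \<open>auto simp: subspace_span\<close>)
      moreover have "x0 \<in> span (insert h B)" using span_mono[OF subset_insertI[of B h]] B(3) by blast
      moreover have "insert h H \<subseteq> span (insert h B)"
        using B(4) span_mono[OF subset_insertI[of B h]] span_base[of h "insert h B"] by blast
      moreover have "\<phi>' x0 = M x0" using \<phi>'(2) B(3,6) by simp
      ultimately show ?thesis using \<phi>' by blast
    qed
  qed
  from this[OF fin span_superset] obtain B \<phi> where B: "span B \<subseteq> span G" "G \<subseteq> span B" "linear \<phi>"
    "\<phi> x0 = M x0" "\<forall>y\<in>span B. \<phi> y \<le> M y" by blast
  have "span G \<subseteq> span B" by (rule span_minimal[OF B(2) subspace_span])
  thus ?thesis using B by blast
qed

lemma fun_sum_apply: "(\<Sum>i\<in>S. f i) x = (\<Sum>i\<in>S. f i x)"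
  for f :: "'i \<Rightarrow> 'x \<Rightarrow> 'b::comm_monoid_add"
  by (induction S rule: infinite_finite_induct) auto

lemma scaleR_fun_apply: "(c *\<^sub>R f) x = c *\<^sub>R f x"
  by (simp add: scaleR_fun_def)

definition Gk :: "nat \<Rightarrow> ('a::euclidean_space) kvec set" where
  "Gk k = (\<lambda>J. wedge k J) ` (PiE {..<k} (\<lambda>_. Basis))"

lemma finite_Gk: "finite (Gk k)"
  unfolding Gk_def by (intro finite_imageI finite_PiE) auto

lemma wedge_expand:
  "wedge k w = (\<Sum>J\<in>PiE {..<k} (\<lambda>_. Basis). (\<Prod>i<k. w i \<bullet> J i) *\<^sub>R wedge k J)"
proof (rule ext)
  fix v
  let ?P = "PiE {..<k} (\<lambda>_. (Basis::'a set))"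
  have "wedge k w v = (\<Sum>p | p permutes {..<k}. of_int (sign p) *
      (\<Sum>J\<in>?P. (\<Prod>i<k. w i \<bullet> J i) * (\<Prod>i<k. J i \<bullet> v (p i))))"
    unfolding wedge_def
  proof (rule sum.cong[OF refl])
    fix p
    have "(\<Prod>i<k. w i \<bullet> v (p i)) = (\<Prod>i<k. \<Sum>b\<in>Basis. (w i \<bullet> b) * (b \<bullet> v (p i)))"
      by (subst euclidean_inner) (simp add: inner_commute)
    also have "\<dots> = (\<Sum>J\<in>?P. \<Prod>i<k. (w i \<bullet> J i) * (J i \<bullet> v (p i)))"
      by (rule prod_sum_PiE) auto
    also have "\<dots> = (\<Sum>J\<in>?P. (\<Prod>i<k. w i \<bullet> J i) * (\<Prod>i<k. J i \<bullet> v (p i)))"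
      by (simp add: prod.distrib)
    finally show "of_int (sign p) * (\<Prod>i<k. w i \<bullet> v (p i)) = of_int (sign p) *
      (\<Sum>J\<in>?P. (\<Prod>i<k. w i \<bullet> J i) * (\<Prod>i<k. J i \<bullet> v (p i)))" by simp
  qed
  also have "\<dots> = (\<Sum>J\<in>?P. (\<Prod>i<k. w i \<bullet> J i) * wedge k J v)"
    unfolding wedge_def sum_distrib_left
    by (subst sum.swap) (simp add: algebra_simps)
  also have "\<dots> = (\<Sum>J\<in>?P. (\<Prod>i<k. w i \<bullet> J i) *\<^sub>R wedge k J) v"
    by (simp add: fun_sum_apply scaleR_fun_apply)
  finally show "wedge k w v = (\<Sum>J\<in>?P. (\<Prod>i<k. w i \<bullet> J i) *\<^sub>R wedge k J) v" .
qed

lemma wedge_in_span: "wedge k w \<in> span (Gk k)"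
  by (subst wedge_expand, rule span_sum, rule span_scale, rule span_base) (auto simp: Gk_def)

lemma plus_kvec: "(\<alpha> + \<beta>) = (\<lambda>v. \<alpha> v + \<beta> v)" for \<alpha> \<beta> :: "'x \<Rightarrow> real"
  by (simp add: fun_eq_iff)

lemma scale_kvec: "(c *\<^sub>R \<alpha>) = (\<lambda>v. c * \<alpha> v)" for \<alpha> :: "'x \<Rightarrow> real"
  by (simp add: fun_eq_iff scaleR_fun_apply)

lemma zero_kvec: "(0::'x \<Rightarrow> real) = (\<lambda>_. 0)"
  by (simp add: fun_eq_iff)

lemma subspace_Lambda: "subspace (Lambda k)"
  unfolding subspace_def plus_kvec scale_kvec zero_kvec
  by (auto intro: Lambda_zero Lambda_add Lambda_scale)

lemma Lambda_span: "Lambda k = span (Gk k)"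
proof
  show "span (Gk k) \<subseteq> Lambda k"
    by (rule span_minimal[OF _ subspace_Lambda]) (auto simp: Gk_def intro: Lambda_wedge')
next
  show "Lambda k \<subseteq> span (Gk k)"
  proof
    fix \<alpha> assume "\<alpha> \<in> Lambda k"
    then obtain n c ws where a: "\<alpha> = (\<lambda>v. \<Sum>i<(n::nat). c i * wedge k (ws i) v)" unfolding Lambda_def by blast
    have "\<alpha> = (\<Sum>i<n. c i *\<^sub>R wedge k (ws i))"
      unfolding a by (simp add: fun_eq_iff fun_sum_apply scaleR_fun_apply)
    also have "\<dots> \<in> span (Gk k)" by (intro span_sum span_scale wedge_in_span)
    finally show "\<alpha> \<in> span (Gk k)" .
  qed
qed

lemma diffop_eq: "diffop u P = (\<lambda>q v. P (q - u) v - P q v)"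
  by (simp add: diffop_def transl_def)

lemma not_supp: "q \<notin> supp P \<Longrightarrow> P q v = 0"
  by (simp add: supp_def)

lemma supp_diffop: "supp (diffop u P) \<subseteq> supp P \<union> (\<lambda>q. q + u) ` supp P"
proof
  fix q assume q: "q \<in> supp (diffop u P)"
  show "q \<in> supp P \<union> (\<lambda>q. q + u) ` supp P"
  proof (rule ccontr)
    assume "q \<notin> supp P \<union> (\<lambda>q. q + u) ` supp P"
    hence "q \<notin> supp P" "q - u \<notin> supp P" by (auto simp: image_iff)
    hence "diffop u P q = (\<lambda>_. 0)" by (simp add: diffop_eq fun_eq_iff not_supp)
    thus False using q by (simp add: supp_def)
  qed
qed

lemma finite_supp_diffop: "finite (supp P) \<Longrightarrow> finite (supp (diffop u P))"
  by (rule finite_subset[OF supp_diffop]) auto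

lemma finite_supp_diffops: "finite (supp P) \<Longrightarrow> finite (supp (diffops us P))"
  by (induction us) (auto intro: finite_supp_diffop)

lemma vec0_superset:
  assumes "finite A" "supp P \<subseteq> A"
  shows "vec0 P v = (\<Sum>q\<in>A. P q v)"
  unfolding vec0_def by (rule sum.mono_neutral_left) (use assms in \<open>auto simp: not_supp\<close>)

lemma supp_dirac: "supp (dirac p \<alpha>) \<subseteq> {p}"
  by (auto simp: supp_def dirac_def)

lemma vec0_dirac: "vec0 (dirac p \<alpha>) = \<alpha>"
proof
  fix v show "vec0 (dirac p \<alpha>) v = \<alpha> v"
    by (subst vec0_superset[OF _ supp_dirac]) (auto simp: dirac_def)
qed

lemma vec0_diffop:
  assumes "finite (supp P)"
  shows "vec0 (diffop u P) = (\<lambda>_. 0)"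
proof
  fix v
  let ?A = "supp P \<union> (\<lambda>q. q + u) ` supp P"
  have fA: "finite ?A" using assms by auto
  have "vec0 (diffop u P) v = (\<Sum>q\<in>?A. P (q - u) v) - (\<Sum>q\<in>?A. P q v)"
    by (subst vec0_superset[OF fA supp_diffop]) (simp add: diffop_eq sum_subtractf)
  also have "(\<Sum>q\<in>?A. P q v) = vec0 P v" by (rule vec0_superset[symmetric]) (use fA in auto)
  also have "(\<Sum>q\<in>?A. P (q - u) v) = (\<Sum>q\<in>(\<lambda>q. q - u) ` ?A. P q v)"
    by (subst sum.reindex) (auto simp: inj_on_def)
  also have "\<dots> = vec0 P v"
  proof (rule vec0_superset[symmetric])
    show "supp P \<subseteq> (\<lambda>q. q - u) ` ?A"
    proof
      fix x assume "x \<in> supp P"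
      thus "x \<in> (\<lambda>q. q - u) ` ?A" by (intro image_eqI[of _ _ "x + u"]) auto
    qed
  qed (use fA in auto)
  finally show "vec0 (diffop u P) v = 0" by simp
qed

lemma vec0_diffops:
  assumes "finite (supp P)" "us \<noteq> []"
  shows "vec0 (diffops us P) = (\<lambda>_. 0)"
proof -
  obtain u us' where "us = u # us'" using assms(2) by (cases us) auto
  thus ?thesis using vec0_diffop[OF finite_supp_diffops[OF assms(1)]] by simp
qed

lemma supp_add: "supp (\<lambda>p v. P p v + Q p v) \<subseteq> supp P \<union> supp Q"
  by (auto simp: supp_def fun_eq_iff)

lemma supp_scale: "supp (\<lambda>p v. c * P p v) \<subseteq> supp P"
  by (auto simp: supp_def fun_eq_iff)

lemma vec0_add:
  assumes "finite (supp P)" "finite (supp Q)"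
  shows "vec0 (\<lambda>p v. P p v + Q p v) = vec0 P + vec0 Q"
proof
  fix v
  let ?A = "supp P \<union> supp Q"
  have "vec0 (\<lambda>p v. P p v + Q p v) v = (\<Sum>q\<in>?A. P q v + Q q v)"
    by (rule vec0_superset[OF _ supp_add]) (use assms in auto)
  also have "\<dots> = vec0 P v + vec0 Q v"
    by (simp add: sum.distrib vec0_superset[of ?A P] vec0_superset[of ?A Q] assms)
  finally show "vec0 (\<lambda>p v. P p v + Q p v) v = (vec0 P + vec0 Q) v" by simp
qed

lemma vec0_scale:
  assumes "finite (supp P)"
  shows "vec0 (\<lambda>p v. c * P p v) = c *\<^sub>R vec0 P"
proof
  fix v
  have "vec0 (\<lambda>p v. c * P p v) v = (\<Sum>q\<in>supp P. c * P q v)"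
    by (rule vec0_superset[OF assms supp_scale])
  also have "\<dots> = c * vec0 P v" by (simp add: vec0_def sum_distrib_left)
  finally show "vec0 (\<lambda>p v. c * P p v) v = (c *\<^sub>R vec0 P) v" by (simp add: scaleR_fun_apply)
qed

lemma vec0_Lambda: "P \<in> chains k \<Longrightarrow> vec0 P \<in> Lambda k"
  unfolding vec0_def chains_def by (auto intro: Lambda_sum)

lemma chains_zero: "(\<lambda>p v. 0) \<in> chains k"
  by (auto simp: chains_def supp_def Lambda_zero)

lemma chains_add: "P \<in> chains k \<Longrightarrow> Q \<in> chains k \<Longrightarrow> (\<lambda>p v. P p v + Q p v) \<in> chains k"
  unfolding chains_def using supp_add[of P Q] finite_subset[OF supp_add[of P Q]]
  by (auto intro: Lambda_add)

lemma chains_scale: "P \<in> chains k \<Longrightarrow> (\<lambda>p v. c * P p v) \<in> chains k"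
  unfolding chains_def using finite_subset[OF supp_scale[of c P]] by (auto intro: Lambda_scale)

lemma chains_sum: "finite S \<Longrightarrow> (\<And>i. i \<in> S \<Longrightarrow> Q i \<in> chains k) \<Longrightarrow> (\<lambda>p v. \<Sum>i\<in>S. Q i p v) \<in> chains k"
  by (induction S rule: finite_induct) (auto intro: chains_add chains_zero)

lemma dirac_chain: "\<alpha> \<in> Lambda k \<Longrightarrow> dirac p \<alpha> \<in> chains k"
  unfolding chains_def using finite_subset[OF supp_dirac[of p \<alpha>]] by (auto intro: Lambda_zero simp: dirac_def)

lemma diffop_chain: "P \<in> chains k \<Longrightarrow> diffop u P \<in> chains k"
  unfolding chains_def using finite_supp_diffop[of P u] by (auto intro: Lambda_diff simp: diffop_eq)

lemma form_zero: "is_form k \<omega> \<Longrightarrow> \<omega> (\<lambda>p v. 0) = 0"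
proof -
  assume "is_form k \<omega>"
  hence "\<forall>c. \<forall>P\<in>chains k. \<omega> (\<lambda>p v. c * P p v) = c * \<omega> P" by (simp add: is_form_def)
  from this[rule_format, OF chains_zero, of 0] show ?thesis by simp
qed

lemma form_add: "is_form k \<omega> \<Longrightarrow> P \<in> chains k \<Longrightarrow> Q \<in> chains k \<Longrightarrow> \<omega> (\<lambda>p v. P p v + Q p v) = \<omega> P + \<omega> Q"
  unfolding is_form_def by (elim conjE) (drule bspec, assumption, drule bspec, assumption, assumption)

lemma form_scale: "is_form k \<omega> \<Longrightarrow> P \<in> chains k \<Longrightarrow> \<omega> (\<lambda>p v. c * P p v) = c * \<omega> P"
  unfolding is_form_def by (elim conjE) (drule spec[of _ c], drule bspec, assumption, assumption)

lemma form_sum: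
  assumes "is_form k \<omega>" "finite S" "\<And>i. i \<in> S \<Longrightarrow> Q i \<in> chains k"
  shows "\<omega> (\<lambda>p v. \<Sum>i\<in>S. Q i p v) = (\<Sum>i\<in>S. \<omega> (Q i))"
  using assms(2,3)
proof (induction S rule: finite_induct)
  case empty then show ?case using form_zero[OF assms(1)] by simp
next
  case (insert x F)
  have "\<omega> (\<lambda>p v. \<Sum>i\<in>insert x F. Q i p v) = \<omega> (\<lambda>p v. Q x p v + (\<Sum>i\<in>F. Q i p v))"
    using insert by simp
  also have "\<dots> = \<omega> (Q x) + \<omega> (\<lambda>p v. \<Sum>i\<in>F. Q i p v)"
    using form_add[OF assms(1), of "Q x" "\<lambda>p v. \<Sum>i\<in>F. Q i p v"] insert chains_sum[of F Q k]
    by simp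
  finally show ?case using insert by simp
qed

lemma SUP_abs_cases:
  "(SUP x\<in>S. ereal \<bar>f x\<bar>) = -\<infinity> \<or> (SUP x\<in>S. ereal \<bar>f x\<bar>) \<ge> 0"
proof (cases "S = {}")
  case True then show ?thesis by (simp add: bot_ereal_def)
next
  case False
  then obtain x where "x \<in> S" by blast
  hence "ereal \<bar>f x\<bar> \<le> (SUP x\<in>S. ereal \<bar>f x\<bar>)" by (rule SUP_upper)
  hence "0 \<le> (SUP x\<in>S. ereal \<bar>f x\<bar>)" by (rule order_trans[rotated]) simp
  thus ?thesis by simp
qed

lemma normj_cases: "form_normj k \<omega> j = -\<infinity> \<or> form_normj k \<omega> j \<ge> 0"
  unfolding form_normj_def by (simp add: SUP_abs_cases)

lemma natnorm_cases: "form_natnorm k r \<omega> = -\<infinity> \<or> form_natnorm k r \<omega> \<ge> 0"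
proof (cases "\<exists>j\<le>r. form_normj k \<omega> j \<ge> 0")
  case True
  then obtain j where j: "j \<le> r" "form_normj k \<omega> j \<ge> 0" by blast
  have "form_normj k \<omega> j \<le> form_natnorm k r \<omega>"
    unfolding form_natnorm_def by (rule Max_ge) (use j in auto)
  thus ?thesis using j by simp
next
  case False
  hence "\<forall>j\<le>r. form_normj k \<omega> j = -\<infinity>" using normj_cases by blast
  hence "(\<lambda>j. form_normj k \<omega> j) ` {..r} = {-\<infinity>}" by auto
  thus ?thesis unfolding form_natnorm_def by simp
qed

lemma real_natnorm_nonneg: "real_of_ereal (form_natnorm k r \<omega>) \<ge> 0"
  using natnorm_cases[of k r \<omega>] by (auto simp: real_of_ereal_pos)

lemma normj_le_natnorm: "j \<le> r \<Longrightarrow> form_normj k \<omega> j \<le> form_natnorm k r \<omega>"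
  unfolding form_natnorm_def by (rule Max_ge) auto

lemma normj0_elem:
  assumes "simple k \<alpha>" "mass k \<alpha> = 1"
  shows "ereal \<bar>\<omega> (dirac p \<alpha>)\<bar> \<le> form_normj k \<omega> 0"
  unfolding form_normj_def
  using SUP_upper[of "(p, \<alpha>)" "{(p, \<alpha>). simple k \<alpha> \<and> mass k \<alpha> = 1}"
      "\<lambda>x. ereal \<bar>\<omega> (dirac (fst x) (snd x))\<bar>"] assms by simp

lemma normj1_elem:
  assumes "\<alpha> \<in> Lambda k" "norm u * mass k \<alpha> = 1"
  shows "ereal \<bar>\<omega> (diffop u (dirac p \<alpha>))\<bar> \<le> form_normj k \<omega> 1"
  unfolding form_normj_def
  using SUP_upper[of "([u], p, \<alpha>)" "{(U, p, \<alpha>). length U = 1 \<and> \<alpha> \<in> Lambda k \<and>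
                   (\<Prod>u\<leftarrow>U. norm u) * mass k \<alpha> = 1}"
      "\<lambda>x. ereal \<bar>\<omega> (diffops (fst x) (dirac (fst (snd x)) (snd (snd x))))\<bar>"] assms by simp

lemma dirac_scale: "dirac p (\<lambda>v. c * \<alpha> v) = (\<lambda>q v. c * dirac p \<alpha> q v)"
  by (auto simp: dirac_def fun_eq_iff)

lemma dirac_zero: "dirac p (\<lambda>_. 0) = (\<lambda>q v. 0)"
  by (auto simp: dirac_def fun_eq_iff)

lemma part2_core:
  fixes \<omega> and N :: real
  assumes form: "is_form k \<omega>" and N0: "N \<ge> 0"
    and b0: "\<And>p \<alpha>. simple k \<alpha> \<Longrightarrow> mass k \<alpha> = 1 \<Longrightarrow> \<bar>\<omega> (dirac p \<alpha>)\<bar> \<le> N"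
    and b1: "\<And>u p \<alpha>. \<alpha> \<in> Lambda k \<Longrightarrow> norm u * mass k \<alpha> = 1 \<Longrightarrow> \<bar>\<omega> (diffop u (dirac p \<alpha>))\<bar> \<le> N"
    and P: "P \<in> chains k" and sp: "supp P \<subseteq> ball p \<epsilon>"
  shows "\<omega> P \<le> N * (mass k (vec0 P) + \<epsilon> * chain_mass k P)"
proof -
  have c0w: "\<bar>\<omega> (dirac p (wedge k w))\<bar> \<le> N * sqrt (gramdet k w)" for p w
  proof (cases "wedge k w = (\<lambda>_. 0)")
    case True
    then show ?thesis using form_zero[OF form] N0 gramdet_nonneg[of k w] by (simp add: dirac_zero)
  next
    case False
    define m where "m = mass k (wedge k w)"
    have mpos: "m > 0" using mass_nonneg[OF Lambda_wedge'[of k w]] mass_zero_imp[OF Lambda_wedge'[of k w]] False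
      unfolding m_def by force
    have mle: "m \<le> sqrt (gramdet k w)" unfolding m_def by (rule mass_wedge_le')
    define \<alpha> where "\<alpha> = (\<lambda>v. (1/m) * wedge k w v)"
    have s: "simple k \<alpha>" unfolding \<alpha>_def simple_def by blast
    have ma: "mass k \<alpha> = 1" unfolding \<alpha>_def using mass_scale[OF Lambda_wedge'[of k w], of "1/m"] mpos
      by (simp add: m_def)
    have "\<omega> (dirac p \<alpha>) = (1/m) * \<omega> (dirac p (wedge k w))"
      unfolding \<alpha>_def dirac_scale by (rule form_scale[OF form dirac_chain[OF Lambda_wedge'[of k w]]])
    hence "\<bar>(1/m) * \<omega> (dirac p (wedge k w))\<bar> \<le> N" using b0[OF s ma, of p] by simp
    hence "\<bar>\<omega> (dirac p (wedge k w))\<bar> \<le> N * m" using mpos by (simp add: abs_mult field_simps)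
    also have "\<dots> \<le> N * sqrt (gramdet k w)" using mle N0 by (simp add: mult_left_mono)
    finally show ?thesis .
  qed
  have c0: "\<bar>\<omega> (dirac p \<beta>)\<bar> \<le> N * mass k \<beta>" if b: "\<beta> \<in> Lambda k" for p \<beta>
  proof -
    have key: "\<bar>\<omega> (dirac p \<beta>)\<bar> \<le> N * (\<Sum>i<(n::nat). \<bar>c i\<bar> * sqrt (gramdet k (ws i)))"
      if d: "\<beta> = (\<lambda>v. \<Sum>i<(n::nat). c i * wedge k (ws i) v)" for n c ws
    proof -
      have "dirac p \<beta> = (\<lambda>q v. \<Sum>i<n. (\<lambda>q v. c i * dirac p (wedge k (ws i)) q v) q v)"
        unfolding d by (auto simp: dirac_def fun_eq_iff)
      hence "\<omega> (dirac p \<beta>) = (\<Sum>i<n. \<omega> (\<lambda>q v. c i * dirac p (wedge k (ws i)) q v))"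
        by (simp add: form_sum[OF form] chains_scale dirac_chain Lambda_wedge')
      also have "\<dots> = (\<Sum>i<n. c i * \<omega> (dirac p (wedge k (ws i))))"
        by (simp add: form_scale[OF form] dirac_chain Lambda_wedge')
      finally have "\<bar>\<omega> (dirac p \<beta>)\<bar> \<le> (\<Sum>i<n. \<bar>c i * \<omega> (dirac p (wedge k (ws i)))\<bar>)"
        by (simp add: sum_abs)
      also have "\<dots> \<le> (\<Sum>i<n. \<bar>c i\<bar> * (N * sqrt (gramdet k (ws i))))"
        by (rule sum_mono) (simp add: abs_mult mult_left_mono c0w)
      finally show ?thesis by (simp add: sum_distrib_left algebra_simps)
    qed
    show ?thesis
    proof (cases "N = 0")
      case True
      obtain n c ws where "\<beta> = (\<lambda>v. \<Sum>i<(n::nat). c i * wedge k (ws i) v)" using b unfolding Lambda_def by blast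
      with key[OF this] True show ?thesis by simp
    next
      case False
      hence Np: "N > 0" using N0 by simp
      have "\<bar>\<omega> (dirac p \<beta>)\<bar> / N \<le> mass k \<beta>"
        by (rule mass_ge[OF b]) (use key Np in \<open>simp add: divide_le_eq mult.commute\<close>)
      thus ?thesis using Np by (simp add: divide_le_eq mult.commute)
    qed
  qed
  have c1: "\<bar>\<omega> (diffop u (dirac p \<alpha>))\<bar> \<le> N * (norm u * mass k \<alpha>)" if a: "\<alpha> \<in> Lambda k" for u p \<alpha>
  proof (cases "u = 0 \<or> mass k \<alpha> = 0")
    case True
    hence "diffop u (dirac p \<alpha>) = (\<lambda>q v. 0)"
    proof
      assume "u = 0" thus ?thesis by (simp add: diffop_eq)
    next
      assume "mass k \<alpha> = 0"
      hence "\<alpha> = (\<lambda>_. 0)" by (rule mass_zero_imp[OF a])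
      thus ?thesis by (simp add: diffop_eq dirac_def)
    qed
    thus ?thesis using form_zero[OF form] N0 mass_nonneg[OF a] by simp
  next
    case False
    have mp: "mass k \<alpha> > 0" using False mass_nonneg[OF a] by simp
    have up: "norm u > 0" using False by simp
    define s where "s = 1 / (norm u * mass k \<alpha>)"
    have sp: "s > 0" unfolding s_def using mp up by simp
    define \<alpha>' where "\<alpha>' = (\<lambda>v. s * \<alpha> v)"
    have a': "\<alpha>' \<in> Lambda k" unfolding \<alpha>'_def by (rule Lambda_scale[OF a])
    have ma': "norm u * mass k \<alpha>' = 1" unfolding \<alpha>'_def mass_scale[OF a] s_def using mp up by simp
    have "diffop u (dirac p \<alpha>') = (\<lambda>q v. s * diffop u (dirac p \<alpha>) q v)"
      unfolding \<alpha>'_def by (auto simp: diffop_eq dirac_def fun_eq_iff algebra_simps)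
    hence "\<omega> (diffop u (dirac p \<alpha>')) = s * \<omega> (diffop u (dirac p \<alpha>))"
      by (simp add: form_scale[OF form] diffop_chain dirac_chain a)
    hence "s * \<bar>\<omega> (diffop u (dirac p \<alpha>))\<bar> \<le> N" using b1[OF a' ma', of p] sp by (simp add: abs_mult)
    thus ?thesis using sp unfolding s_def using mp up by (simp add: field_simps)
  qed
  have fin: "finite (supp P)" using P by (simp add: chains_def)
  have PL: "P q \<in> Lambda k" for q using P by (simp add: chains_def)
  have dec: "P = (\<lambda>x v. \<Sum>q\<in>supp P. (\<lambda>x v. dirac p (P q) x v + diffop (q - p) (dirac p (P q)) x v) x v)"
  proof (intro ext)
    fix x v
    have "(\<Sum>q\<in>supp P. dirac p (P q) x v + diffop (q - p) (dirac p (P q)) x v)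
        = (\<Sum>q\<in>supp P. dirac q (P q) x v)"
      by (rule sum.cong) (auto simp: diffop_eq dirac_def)
    also have "\<dots> = P x v"
    proof (cases "x \<in> supp P")
      case True
      then show ?thesis by (subst sum.remove[OF fin True]) (auto simp: dirac_def intro!: sum.neutral split: if_splits)
    next
      case False
      then show ?thesis by (auto simp: dirac_def not_supp intro!: sum.neutral)
    qed
    finally show "P x v = (\<Sum>q\<in>supp P. dirac p (P q) x v + diffop (q - p) (dirac p (P q)) x v)" by simp
  qed
  have "\<omega> P = (\<Sum>q\<in>supp P. \<omega> (\<lambda>x v. dirac p (P q) x v + diffop (q - p) (dirac p (P q)) x v))"
    by (subst dec, rule form_sum[OF form fin]) (simp add: chains_add dirac_chain diffop_chain PL)
  also have "\<dots> = (\<Sum>q\<in>supp P. \<omega> (dirac p (P q))) + (\<Sum>q\<in>supp P. \<omega> (diffop (q - p) (dirac p (P q))))"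
    by (simp add: form_add[OF form] dirac_chain diffop_chain PL sum.distrib)
  also have "(\<Sum>q\<in>supp P. \<omega> (dirac p (P q))) = \<omega> (dirac p (vec0 P))"
  proof -
    have "dirac p (vec0 P) = (\<lambda>x v. \<Sum>q\<in>supp P. dirac p (P q) x v)"
      by (auto simp: dirac_def vec0_def fun_eq_iff)
    thus ?thesis by (simp add: form_sum[OF form fin] dirac_chain PL)
  qed
  also have "\<omega> (dirac p (vec0 P)) \<le> N * mass k (vec0 P)"
    using c0[OF vec0_Lambda[OF P], of p] by simp
  also have "(\<Sum>q\<in>supp P. \<omega> (diffop (q - p) (dirac p (P q)))) \<le> (\<Sum>q\<in>supp P. N * (\<epsilon> * mass k (P q)))"
  proof (rule sum_mono)
    fix q assume q: "q \<in> supp P"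
    have d: "norm (q - p) \<le> \<epsilon>" using sp q by (auto simp: dist_norm norm_minus_commute)
    have "\<omega> (diffop (q - p) (dirac p (P q))) \<le> N * (norm (q - p) * mass k (P q))"
      using c1[OF PL, of "q - p" p q] by simp
    also have "\<dots> \<le> N * (\<epsilon> * mass k (P q))"
      using d N0 mass_nonneg[OF PL] by (intro mult_left_mono mult_right_mono) auto
    finally show "\<omega> (diffop (q - p) (dirac p (P q))) \<le> N * (\<epsilon> * mass k (P q))" .
  qed
  finally show ?thesis by (simp add: chain_mass_def sum_distrib_left algebra_simps)
qed

lemma part2:
  assumes P: "P \<in> chains k" and ep: "\<epsilon> > 0" and sp: "supp P \<subseteq> ball p \<epsilon>"
  shows "chain_natnorm k 1 P \<le> ereal (mass k (vec0 P) + \<epsilon> * chain_mass k P)"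
proof -
  define R where "R = mass k (vec0 P) + \<epsilon> * chain_mass k P"
  have PL: "P q \<in> Lambda k" for q using P by (simp add: chains_def)
  have R0: "R \<ge> 0" unfolding R_def chain_mass_def using ep
    by (intro add_nonneg_nonneg mult_nonneg_nonneg sum_nonneg mass_nonneg vec0_Lambda[OF P] PL) auto
  have "ereal (\<omega> P / real_of_ereal (form_natnorm k 1 \<omega>)) \<le> ereal R"
    if w: "\<omega> \<in> {\<omega> \<in> Bforms k 1. \<exists>Q\<in>chains k. \<omega> Q \<noteq> 0}" for \<omega>
  proof -
    define F where "F = form_natnorm k 1 \<omega>"
    define N where "N = real_of_ereal F"
    have form: "is_form k \<omega>" and Finf: "F < \<infinity>" using w by (auto simp: Bforms_def F_def)
    have N0: "N \<ge> 0" unfolding N_def F_def by (rule real_natnorm_nonneg)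
    show ?thesis
    proof (cases "F = -\<infinity>")
      case True
      then show ?thesis using R0 unfolding F_def by simp
    next
      case False
      hence FN: "F = ereal N" unfolding N_def using Finf by (cases F) auto
      have b0: "\<bar>\<omega> (dirac p \<alpha>)\<bar> \<le> N" if "simple k \<alpha>" "mass k \<alpha> = 1" for p \<alpha>
      proof -
        have "ereal \<bar>\<omega> (dirac p \<alpha>)\<bar> \<le> form_normj k \<omega> 0" by (rule normj0_elem[OF that])
        also have "\<dots> \<le> F" unfolding F_def by (rule normj_le_natnorm) simp
        finally show ?thesis using FN by simp
      qed
      have b1: "\<bar>\<omega> (diffop u (dirac p \<alpha>))\<bar> \<le> N" if "\<alpha> \<in> Lambda k" "norm u * mass k \<alpha> = 1" for u p \<alpha>
      proof -
        have "ereal \<bar>\<omega> (diffop u (dirac p \<alpha>))\<bar> \<le> form_normj k \<omega> 1" by (rule normj1_elem[OF that])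
        also have "\<dots> \<le> F" unfolding F_def by (rule normj_le_natnorm) simp
        finally show ?thesis using FN by simp
      qed
      have core: "\<omega> P \<le> N * R"
        unfolding R_def by (rule part2_core[OF form N0 b0 b1 P sp])
      have "\<omega> P / N \<le> R"
      proof (cases "N = 0")
        case True then show ?thesis using R0 by simp
      next
        case False then show ?thesis using core N0 by (simp add: divide_le_eq mult.commute)
      qed
      thus ?thesis unfolding F_def[symmetric] N_def[symmetric] by simp
    qed
  qed
  hence "(SUP \<omega> \<in> {\<omega> \<in> Bforms k 1. \<exists>Q\<in>chains k. \<omega> Q \<noteq> 0}.
              ereal (\<omega> P / real_of_ereal (form_natnorm k 1 \<omega>))) \<le> ereal R"
    by (rule SUP_least)
  thus ?thesis unfolding chain_natnorm_def R_def[symmetric] using R0 by (intro sup_least) auto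
qed

lemma part1:
  fixes P :: "('a::euclidean_space) chain"
  assumes P: "P \<in> chains k" and r: "r \<ge> 1"
  shows "ereal (mass k (vec0 P)) \<le> chain_natnorm k r P"
proof (cases "mass k (vec0 P) = 0")
  case True
  then show ?thesis unfolding chain_natnorm_def by (simp add: zero_ereal_def[symmetric])
next
  case False
  have vL: "vec0 P \<in> Lambda k" by (rule vec0_Lambda[OF P])
  have m0: "mass k (vec0 P) > 0" using False mass_nonneg[OF vL] by simp
  have Madd: "mass k (y + z) \<le> mass k y + mass k z" if "y \<in> span (Gk k :: 'a kvec set)" "z \<in> span (Gk k :: 'a kvec set)" for y z
    using mass_add[of y k z] that unfolding Lambda_span[symmetric] plus_kvec by simp
  have Mscale: "mass k (c *\<^sub>R y) = \<bar>c\<bar> * mass k y" if "y \<in> span (Gk k :: 'a kvec set)" for y c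
    using mass_scale[of y k c] that unfolding Lambda_span[symmetric] scale_kvec by simp
  obtain \<phi> where lin: "linear \<phi>" and phx: "\<phi> (vec0 P) = mass k (vec0 P)"
    and phle: "\<forall>y\<in>span (Gk k). \<phi> y \<le> mass k y"
    using hahn_banach_finite[where G="Gk k" and M="mass k" and ?x0.0="vec0 P", OF finite_Gk Madd Mscale] vL Lambda_span by blast
  have phabs: "\<bar>\<phi> y\<bar> \<le> mass k y" if y: "y \<in> Lambda k" for y
  proof -
    have "\<phi> y \<le> mass k y" using phle y Lambda_span by blast
    moreover have "- \<phi> y \<le> mass k y"
    proof -
      have "(-1) *\<^sub>R y \<in> Lambda k" using Lambda_scale[OF y, of "-1"] by (simp add: scale_kvec)
      hence "\<phi> ((-1) *\<^sub>R y) \<le> mass k ((-1) *\<^sub>R y)" using phle Lambda_span by blast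
      also have "mass k ((-1) *\<^sub>R y) = mass k y" unfolding scale_kvec mass_scale[OF y] by simp
      finally show ?thesis using lin by (simp add: linear_neg)
    qed
    ultimately show ?thesis by simp
  qed
  define \<omega> where "\<omega> Q = \<phi> (vec0 Q)" for Q :: "'a chain"
  have form: "is_form k \<omega>"
    unfolding is_form_def
  proof (intro conjI ballI allI)
    fix P1 Q1 :: "'a chain" assume "P1 \<in> chains k" "Q1 \<in> chains k"
    hence "finite (supp P1)" "finite (supp Q1)" by (auto simp: chains_def)
    thus "\<omega> (\<lambda>p v. P1 p v + Q1 p v) = \<omega> P1 + \<omega> Q1"
      unfolding \<omega>_def by (simp add: vec0_add linear_add[OF lin])
  next
    fix c and P1 :: "'a chain" assume "P1 \<in> chains k"
    hence "finite (supp P1)" by (auto simp: chains_def)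
    thus "\<omega> (\<lambda>p v. c * P1 p v) = c * \<omega> P1"
      unfolding \<omega>_def by (simp add: vec0_scale linear_scale[OF lin])
  qed
  have n0: "form_normj k \<omega> 0 \<le> 1"
  proof -
    have "ereal \<bar>\<omega> (dirac (fst x) (snd x))\<bar> \<le> 1"
      if x: "x \<in> {(p, \<alpha>). simple k \<alpha> \<and> mass k \<alpha> = (1::real)}" for x :: "'a \<times> 'a kvec"
    proof -
      obtain p \<alpha> where xe: "x = (p, \<alpha>)" by (cases x)
      have s: "simple k \<alpha>" and m: "mass k \<alpha> = 1" using x xe by auto
      have aL: "\<alpha> \<in> Lambda k" using s unfolding simple_def by (auto intro: Lambda_wedge)
      show ?thesis using phabs[OF aL] m xe unfolding \<omega>_def vec0_dirac by simp
    qed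
    from SUP_least[where A="{(p, \<alpha>). simple k \<alpha> \<and> mass k \<alpha> = (1::real)}" and
        f="\<lambda>x. ereal \<bar>\<omega> (dirac (fst x) (snd x))\<bar>", OF this]
    show ?thesis unfolding form_normj_def by simp
  qed
  have nj: "form_normj k \<omega> j \<le> 0" if jn: "j \<noteq> 0" for j
  proof -
    have "ereal \<bar>\<omega> (diffops (fst x) (dirac (fst (snd x)) (snd (snd x))))\<bar> \<le> 0"
      if x: "x \<in> {(U, p, \<alpha>). length U = j \<and> \<alpha> \<in> Lambda k \<and>
                   (\<Prod>u\<leftarrow>U. norm u) * mass k \<alpha> = 1}" for x :: "'a list \<times> 'a \<times> 'a kvec"
    proof -
      obtain U p \<alpha> where xe: "x = (U, p, \<alpha>)" by (cases x) auto
      have "length U = j" using x xe by auto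
      hence "U \<noteq> []" using jn by auto
      hence "vec0 (diffops U (dirac p \<alpha>)) = (\<lambda>_. 0)"
        by (intro vec0_diffops finite_subset[OF supp_dirac]) auto
      thus ?thesis
        unfolding \<omega>_def xe using linear_0[OF lin] by (simp add: zero_kvec[symmetric])
    qed
    from SUP_least[where A="{(U, p, \<alpha>). length U = j \<and> \<alpha> \<in> Lambda k \<and>
                   (\<Prod>u\<leftarrow>U. norm u) * mass k \<alpha> = 1}" and
        f="\<lambda>x. ereal \<bar>\<omega> (diffops (fst x) (dirac (fst (snd x)) (snd (snd x))))\<bar>", OF this]
    show ?thesis unfolding form_normj_def using jn by simp
  qed
  have nat_le: "form_natnorm k r \<omega> \<le> 1"
    unfolding form_natnorm_def
  proof (subst Max_le_iff, simp, simp, clarify)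
    fix j show "form_normj k \<omega> j \<le> 1"
      using n0 nj[of j] by (cases "j = 0") (auto intro: order_trans)
  qed
  obtain n c ws where d: "vec0 P = (\<lambda>v. \<Sum>i<(n::nat). c i * wedge k (ws i) v)"
    using vL unfolding Lambda_def by blast
  have "vec0 P = (\<Sum>i<n. c i *\<^sub>R wedge k (ws i))"
    unfolding d by (simp add: fun_eq_iff fun_sum_apply scaleR_fun_apply)
  hence "\<phi> (vec0 P) = (\<Sum>i<n. c i * \<phi> (wedge k (ws i)))"
    by (simp add: linear_sum[OF lin] linear_scale[OF lin])
  hence "(\<Sum>i<n. c i * \<phi> (wedge k (ws i))) \<noteq> 0" using phx m0 by simp
  then obtain i where "c i * \<phi> (wedge k (ws i)) \<noteq> 0" by (meson sum.neutral)
  hence phw: "\<phi> (wedge k (ws i)) \<noteq> 0" by simp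
  define w where "w = ws i"
  have wne: "wedge k w \<noteq> (\<lambda>_. 0)" using phw linear_0[OF lin] unfolding w_def by (auto simp: zero_kvec)
  define m where "m = mass k (wedge k w)"
  have mpos: "m > 0" using mass_nonneg[OF Lambda_wedge'[of k w]] mass_zero_imp[OF Lambda_wedge'[of k w]] wne
    unfolding m_def by force
  define \<alpha> where "\<alpha> = (\<lambda>v. (1/m) * wedge k w v)"
  have s: "simple k \<alpha>" unfolding \<alpha>_def simple_def by blast
  have ma: "mass k \<alpha> = 1" unfolding \<alpha>_def using mass_scale[OF Lambda_wedge'[of k w], of "1/m"] mpos
    by (simp add: m_def)
  have "\<alpha> = (1/m) *\<^sub>R wedge k w" unfolding \<alpha>_def by (simp add: scale_kvec)
  hence "\<phi> \<alpha> = (1/m) * \<phi> (wedge k w)" by (simp add: linear_scale[OF lin])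
  hence pa: "\<phi> \<alpha> \<noteq> 0" using mpos phw unfolding w_def by simp
  have "ereal \<bar>\<omega> (dirac 0 \<alpha>)\<bar> \<le> form_normj k \<omega> 0" by (rule normj0_elem[OF s ma])
  also have "\<dots> \<le> form_natnorm k r \<omega>" by (rule normj_le_natnorm) simp
  finally have le1: "ereal \<bar>\<omega> (dirac 0 \<alpha>)\<bar> \<le> form_natnorm k r \<omega>" .
  have "0 < ereal \<bar>\<omega> (dirac 0 \<alpha>)\<bar>" using pa unfolding \<omega>_def vec0_dirac by simp
  hence nat_pos: "form_natnorm k r \<omega> > 0" using le1 by (rule less_le_trans)
  define N where "N = real_of_ereal (form_natnorm k r \<omega>)"
  have FN: "form_natnorm k r \<omega> = ereal N" and N01: "0 < N" "N \<le> 1"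
    using nat_pos nat_le unfolding N_def by (cases "form_natnorm k r \<omega>"; auto)+
  have wB: "\<omega> \<in> {\<omega> \<in> Bforms k r. \<exists>Q\<in>chains k. \<omega> Q \<noteq> 0}"
    using form FN P phx m0 unfolding Bforms_def \<omega>_def by (auto intro!: bexI[of _ P])
  have "mass k (vec0 P) \<le> \<omega> P / N"
    using N01 m0 phx unfolding \<omega>_def by (simp add: le_divide_eq mult_left_le)
  hence "ereal (mass k (vec0 P)) \<le> ereal (\<omega> P / real_of_ereal (form_natnorm k r \<omega>))"
    unfolding N_def by simp
  also have "\<dots> \<le> (SUP \<omega> \<in> {\<omega> \<in> Bforms k r. \<exists>Q\<in>chains k. \<omega> Q \<noteq> 0}.
              ereal (\<omega> P / real_of_ereal (form_natnorm k r \<omega>)))"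
    by (rule SUP_upper[OF wB])
  also have "\<dots> \<le> chain_natnorm k r P" unfolding chain_natnorm_def by simp
  finally show ?thesis .
qed

theorem mainTheorem16:
  fixes P :: "('a::euclidean_space) chain" and k r :: nat
  assumes "P \<in> chains k" and "r \<ge> 1"
  shows "ereal (mass k (vec0 P)) \<le> chain_natnorm k r P \<and>
         (\<forall>(p::'a) (\<epsilon>::real). \<epsilon> > 0 \<and> supp P \<subseteq> ball p \<epsilon> \<longrightarrow>
           chain_natnorm k 1 P \<le> ereal (mass k (vec0 P) + \<epsilon> * chain_mass k P))"
  using part1[OF assms] part2[OF assms(1)] by blast

end
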